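(* $rx_3(K_{2,3})=rx_3(K_{2,4})=3$, and $rx_3(K_{2,t})\geq 4$ for every $t\geq 5$.
   Context: An edge coloring of a graph $G$ is any assignment of colors to the edges (adjacent edges may receive the same color). A tree $T$ in an edge-colored graph is a rainbow tree if no two edges of $T$ have the same color. For $S\subseteq V(G)$, an $S$-tree is a subtree of $G$ containing all vertices of $S$. A $3$-rainbow coloring of $G$ is an edge coloring such that for every set $S$ of $3$ vertices of $G$ there is a rainbow $S$-tree in $G$. The $3$-rainbow index $rx_3(G)$ is the minimum number of colors in a $3$-rainbow coloring of $G$. $K_{2,t}$ denotes the complete bipartite graph with parts of sizes $2$ and $t$. *)

theory Defs
  imports Main
begin

(* Graphs are given by a vertex set V and an edge set E of 2-element vertex sets. *)

definition reach :: "'a set set \<Rightarrow> 'a \<Rightarrow> 'a \<Rightarrow> bool" where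
  "reach F u v = ((\<lambda>x y. {x, y} \<in> F)\<^sup>*\<^sup>* u v)"

definition is_tree :: "'a set \<Rightarrow> 'a set set \<Rightarrow> bool" where
  "is_tree VT ET \<longleftrightarrow> VT \<noteq> {} \<and> finite VT \<and>
     (\<forall>e\<in>ET. \<exists>x y. x \<noteq> y \<and> x \<in> VT \<and> y \<in> VT \<and> e = {x, y}) \<and>
     (\<forall>u\<in>VT. \<forall>v\<in>VT. reach ET u v) \<and>
     (\<forall>e\<in>ET. \<forall>x y. e = {x, y} \<longrightarrow> \<not> reach (ET - {e}) x y)"

definition is_S_tree :: "'a set \<Rightarrow> 'a set set \<Rightarrow> 'a set \<Rightarrow> 'a set \<Rightarrow> 'a set set \<Rightarrow> bool" where
  "is_S_tree V E S VT ET \<longleftrightarrow> VT \<subseteq> V \<and> ET \<subseteq> E \<and> S \<subseteq> VT \<and> is_tree VT ET"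

definition rainbow :: "('a set \<Rightarrow> nat) \<Rightarrow> 'a set set \<Rightarrow> bool" where
  "rainbow c ET \<longleftrightarrow> inj_on c ET"

definition three_rainbow_coloring :: "'a set \<Rightarrow> 'a set set \<Rightarrow> ('a set \<Rightarrow> nat) \<Rightarrow> bool" where
  "three_rainbow_coloring V E c \<longleftrightarrow>
     (\<forall>S. S \<subseteq> V \<and> card S = 3 \<longrightarrow> (\<exists>VT ET. is_S_tree V E S VT ET \<and> rainbow c ET))"

definition rx3 :: "'a set \<Rightarrow> 'a set set \<Rightarrow> nat" where
  "rx3 V E = (LEAST k. \<exists>c. c ` E \<subseteq> {..<k} \<and> three_rainbow_coloring V E c)"

definition K2t_V :: "nat \<Rightarrow> (nat + nat) set" where
  "K2t_V t = {Inl 0, Inl 1} \<union> Inr ` {..<t}"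

definition K2t_E :: "nat \<Rightarrow> (nat + nat) set set" where
  "K2t_E t = {{Inl i, Inr j} | i j. i < 2 \<and> j < t}"

end

theory Submission
  imports Defs
begin

lemma reach_refl: "reach F u u"
  unfolding reach_def by simp

lemma reach_edge: "{u,v} \<in> F \<Longrightarrow> reach F u v"
  unfolding reach_def by (rule r_into_rtranclp)

lemma reach_trans: "reach F u v \<Longrightarrow> reach F v w \<Longrightarrow> reach F u w"
  unfolding reach_def by (rule rtranclp_trans)

lemma reach_sym: assumes "reach F u v" shows "reach F v u"
  using assms unfolding reach_def
proof (induction rule: rtranclp_induct)
  case base then show ?case by simp
next
  case (step y z)
  have "{z,y} \<in> F" using step(2) by (simp add: insert_commute)
  then show ?case using step(3) by (rule converse_rtranclp_into_rtranclp)
qed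

lemma reach_closed:
  assumes "\<And>a b. {a,b} \<in> F \<Longrightarrow> a \<in> C \<Longrightarrow> b \<in> C" "reach F u v" "u \<in> C"
  shows "v \<in> C"
  using assms(2,3) unfolding reach_def
proof (induction rule: rtranclp_induct)
  case base then show ?case by simp
next
  case (step y z) then show ?case using assms(1) by blast
qed

lemma cut:
  assumes "e = {p,q}" "\<And>a b. {a,b} \<in> F \<Longrightarrow> a \<in> C \<Longrightarrow> b \<in> C" "(p \<in> C) \<noteq> (q \<in> C)"
  shows "\<not> reach F p q"
proof
  assume r: "reach F p q"
  show False
  proof (cases "p \<in> C")
    case True
    have "q \<in> C" by (rule reach_closed[of F C p q, OF assms(2) r True])
    then show False using True assms(3) by simp
  next
    case False
    then have q: "q \<in> C" using assms(3) by simp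
    have "p \<in> C" by (rule reach_closed[of F C q p, OF assms(2) reach_sym[OF r] q])
    then show False using False by simp
  qed
qed

lemma cut2:
  assumes "e = {u,v}" "e = {p,q}" "(u \<in> C) \<noteq> (v \<in> C)"
    "\<forall>f\<in>E. f \<noteq> e \<longrightarrow> f \<subseteq> C \<or> f \<inter> C = {}"
  shows "\<not> reach (E - {e}) p q"
proof (rule cut[OF assms(2)])
  have "{p,q} = {u,v}" using assms(1,2) by simp
  then have "(p = u \<and> q = v) \<or> (p = v \<and> q = u)" by (simp add: doubleton_eq_iff)
  then show "(p \<in> C) \<noteq> (q \<in> C)" using assms(3) by blast
  fix a b assume "{a,b} \<in> E - {e}" "a \<in> C"
  then have ab: "{a,b} \<in> E" "{a,b} \<noteq> e" by auto
  have "{a,b} \<noteq> e \<longrightarrow> {a,b} \<subseteq> C \<or> {a,b} \<inter> C = {}" using assms(4) ab(1) by (rule bspec)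
  then have "{a,b} \<subseteq> C \<or> {a,b} \<inter> C = {}" using ab(2) by (rule mp)
  then show "b \<in> C" using \<open>a \<in> C\<close> by auto
qed

lemma conn_root: "\<forall>v\<in>V. reach F r v \<Longrightarrow> \<forall>u\<in>V. \<forall>v\<in>V. reach F u v"
proof (intro ballI)
  fix u v assume a: "\<forall>v\<in>V. reach F r v" "u \<in> V" "v \<in> V"
  then have "reach F r u" "reach F r v" by auto
  then show "reach F u v" using reach_sym reach_trans by metis
qed

lemma edge_ok: "a \<noteq> b \<Longrightarrow> a \<in> V \<Longrightarrow> b \<in> V \<Longrightarrow> \<exists>x y. x \<noteq> y \<and> x \<in> V \<and> y \<in> V \<and> {a,b} = {x,y}"
  by blast

lemma star3:
  assumes "distinct [c,x,y,z]"
  shows "is_tree {c,x,y,z} {{c,x},{c,y},{c,z}}"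
proof -
  let ?E = "{{c,x},{c,y},{c,z}}" let ?V = "{c,x,y,z}"
  have r: "\<forall>v\<in>{c,x,y,z}. reach ?E c v"
  proof -
    have "reach ?E c x" "reach ?E c y" "reach ?E c z" by (rule reach_edge; simp)+
    then show ?thesis by (simp add: reach_refl)
  qed
  have conn: "\<forall>u\<in>{c,x,y,z}. \<forall>v\<in>{c,x,y,z}. reach ?E u v"
    using r by (rule conn_root)
  have acyc: "\<forall>e\<in>?E. \<forall>p q. e = {p,q} \<longrightarrow> \<not> reach (?E - {e}) p q"
  proof (intro ballI allI impI)
    fix e p q assume e: "e \<in> ?E" and pq: "e = {p,q}"
    from e consider "e = {c,x}" | "e = {c,y}" | "e = {c,z}" by blast
    then show "\<not> reach (?E - {e}) p q"
    proof cases
      case 1 show ?thesis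
        by (rule cut2[OF 1 pq, where C="{x}"]) (use assms 1 in auto)
    next
      case 2 show ?thesis
        by (rule cut2[OF 2 pq, where C="{y}"]) (use assms 2 in auto)
    next
      case 3 show ?thesis
        by (rule cut2[OF 3 pq, where C="{z}"]) (use assms 3 in auto)
    qed
  qed
  have edges: "\<forall>e\<in>?E. \<exists>a b. a \<noteq> b \<and> a \<in> ?V \<and> b \<in> ?V \<and> e = {a, b}"
  proof
    fix e assume "e \<in> ?E"
    then show "\<exists>a b. a \<noteq> b \<and> a \<in> ?V \<and> b \<in> ?V \<and> e = {a, b}"
      using assms by (elim insertE emptyE) (simp; blast)+
  qed
  have fin: "?V \<noteq> {} \<and> finite ?V" by simp
  show ?thesis unfolding is_tree_def
    by (intro conjI; (rule fin[THEN conjunct1] fin[THEN conjunct2] edges conn acyc)?)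
qed

lemma path3:
  assumes "distinct [w,x,y,z]"
  shows "is_tree {w,x,y,z} {{w,x},{x,y},{y,z}}"
proof -
  let ?E = "{{w,x},{x,y},{y,z}}" let ?V = "{w,x,y,z}"
  have r: "\<forall>v\<in>{w,x,y,z}. reach ?E w v"
  proof -
    have 1: "reach ?E w x" by (rule reach_edge; simp)
    have 2: "reach ?E x y" by (rule reach_edge; simp)
    have 3: "reach ?E y z" by (rule reach_edge; simp)
    have 4: "reach ?E w y" by (rule reach_trans[OF 1 2])
    have 5: "reach ?E w z" by (rule reach_trans[OF 4 3])
    show ?thesis using 1 4 5 by (simp add: reach_refl)
  qed
  have conn: "\<forall>u\<in>{w,x,y,z}. \<forall>v\<in>{w,x,y,z}. reach ?E u v"
    using r by (rule conn_root)
  have acyc: "\<forall>e\<in>?E. \<forall>p q. e = {p,q} \<longrightarrow> \<not> reach (?E - {e}) p q"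
  proof (intro ballI allI impI)
    fix e p q assume e: "e \<in> ?E" and pq: "e = {p,q}"
    from e consider "e = {w,x}" | "e = {x,y}" | "e = {y,z}" by blast
    then show "\<not> reach (?E - {e}) p q"
    proof cases
      case 1 show ?thesis
        by (rule cut2[OF 1 pq, where C="{w}"]) (use assms 1 in auto)
    next
      case 2 show ?thesis
        by (rule cut2[OF 2 pq, where C="{w,x}"]) (use assms 2 in auto)
    next
      case 3 show ?thesis
        by (rule cut2[OF 3 pq, where C="{z}"]) (use assms 3 in auto)
    qed
  qed
  have edges: "\<forall>e\<in>?E. \<exists>a b. a \<noteq> b \<and> a \<in> ?V \<and> b \<in> ?V \<and> e = {a, b}"
  proof
    fix e assume "e \<in> ?E"
    then show "\<exists>a b. a \<noteq> b \<and> a \<in> ?V \<and> b \<in> ?V \<and> e = {a, b}"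
      using assms by (elim insertE emptyE) (simp; blast)+
  qed
  have fin: "?V \<noteq> {} \<and> finite ?V" by simp
  show ?thesis unfolding is_tree_def
    by (intro conjI; (rule fin[THEN conjunct1] fin[THEN conjunct2] edges conn acyc)?)
qed

lemma path2:
  assumes "distinct [x,y,z]"
  shows "is_tree {x,y,z} {{x,y},{y,z}}"
proof -
  let ?E = "{{x,y},{y,z}}" let ?V = "{x,y,z}"
  have r: "\<forall>v\<in>{x,y,z}. reach ?E y v"
  proof -
    have "reach ?E y x" "reach ?E y z" by (rule reach_edge; simp add: insert_commute)+
    then show ?thesis by (simp add: reach_refl)
  qed
  have conn: "\<forall>u\<in>{x,y,z}. \<forall>v\<in>{x,y,z}. reach ?E u v"
    using r by (rule conn_root)
  have acyc: "\<forall>e\<in>?E. \<forall>p q. e = {p,q} \<longrightarrow> \<not> reach (?E - {e}) p q"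
  proof (intro ballI allI impI)
    fix e p q assume e: "e \<in> ?E" and pq: "e = {p,q}"
    from e consider "e = {x,y}" | "e = {y,z}" by blast
    then show "\<not> reach (?E - {e}) p q"
    proof cases
      case 1 show ?thesis
        by (rule cut2[OF 1 pq, where C="{x}"]) (use assms 1 in auto)
    next
      case 2 show ?thesis
        by (rule cut2[OF 2 pq, where C="{z}"]) (use assms 2 in auto)
    qed
  qed
  have edges: "\<forall>e\<in>?E. \<exists>a b. a \<noteq> b \<and> a \<in> ?V \<and> b \<in> ?V \<and> e = {a, b}"
  proof
    fix e assume "e \<in> ?E"
    then show "\<exists>a b. a \<noteq> b \<and> a \<in> ?V \<and> b \<in> ?V \<and> e = {a, b}"
      using assms by (elim insertE emptyE) (simp; blast)+
  qed
  have fin: "?V \<noteq> {} \<and> finite ?V" by simp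
  show ?thesis unfolding is_tree_def
    by (intro conjI; (rule fin[THEN conjunct1] fin[THEN conjunct2] edges conn acyc)?)
qed

lemma KE_mem: "{Inl i, Inr j} \<in> K2t_E t \<longleftrightarrow> i < 2 \<and> j < t"
  unfolding K2t_E_def by (auto simp: doubleton_eq_iff)

lemma KE_mem': "{Inr j, Inl i} \<in> K2t_E t \<longleftrightarrow> i < 2 \<and> j < t"
  using KE_mem by (metis insert_commute)

lemma KE_form: "e \<in> K2t_E t \<Longrightarrow> \<exists>i j. i < 2 \<and> j < t \<and> e = {Inl i, Inr j}"
  unfolding K2t_E_def by blast

lemma KV_Inl: "i < 2 \<Longrightarrow> Inl i \<in> K2t_V t"
  unfolding K2t_V_def by (cases i) auto

lemma KV_Inr: "j < t \<Longrightarrow> Inr j \<in> K2t_V t"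
  unfolding K2t_V_def by auto

lemma KV_form: "v \<in> K2t_V t \<Longrightarrow> (\<exists>i. i < 2 \<and> v = Inl i) \<or> (\<exists>j. j < t \<and> v = Inr j)"
  unfolding K2t_V_def by auto

lemma treeA:
  assumes "i < 2" "a < t" "b < t" "c < t" "a \<noteq> b" "a \<noteq> c" "b \<noteq> c"
  shows "is_S_tree (K2t_V t) (K2t_E t) {Inr a, Inr b, Inr c}
           {Inl i, Inr a, Inr b, Inr c} {{Inl i, Inr a}, {Inl i, Inr b}, {Inl i, Inr c}}"
  unfolding is_S_tree_def
proof (intro conjI)
  show "is_tree {Inl i, Inr a, Inr b, Inr c} {{Inl i, Inr a}, {Inl i, Inr b}, {Inl i, Inr c}}"
    by (rule star3) (use assms in simp)
  show "{Inl i, Inr a, Inr b, Inr c} \<subseteq> K2t_V t" using assms by (simp add: KV_Inl KV_Inr)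
  show "{{Inl i, Inr a}, {Inl i, Inr b}, {Inl i, Inr c}} \<subseteq> K2t_E t" using assms by (simp add: KE_mem)
qed auto

lemma treeB:
  assumes "a < t"
  shows "is_S_tree (K2t_V t) (K2t_E t) {Inl 0, Inl 1, Inr a}
           {Inl 0, Inr a, Inl 1} {{Inl 0, Inr a}, {Inr a, Inl 1}}"
  unfolding is_S_tree_def
proof (intro conjI)
  show "is_tree {Inl (0::nat), Inr a, Inl 1} {{Inl 0, Inr a}, {Inr a, Inl 1}}"
    by (rule path2) simp
  show "{Inl 0, Inr a, Inl 1} \<subseteq> K2t_V t" using assms by (simp add: KV_Inl KV_Inr)
  show "{{Inl 0, Inr a}, {Inr a, Inl 1}} \<subseteq> K2t_E t" using assms by (simp add: KE_mem KE_mem')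
qed auto

lemma treeC2:
  assumes "i < 2" "a < t" "b < t" "a \<noteq> b"
  shows "is_S_tree (K2t_V t) (K2t_E t) {Inl i, Inr a, Inr b}
           {Inr a, Inl i, Inr b} {{Inr a, Inl i}, {Inl i, Inr b}}"
  unfolding is_S_tree_def
proof (intro conjI)
  show "is_tree {Inr a, Inl i, Inr b} {{Inr a, Inl i}, {Inl i, Inr b}}"
    by (rule path2) (use assms in simp)
  show "{Inr a, Inl i, Inr b} \<subseteq> K2t_V t" using assms by (simp add: KV_Inl KV_Inr)
  show "{{Inr a, Inl i}, {Inl i, Inr b}} \<subseteq> K2t_E t" using assms by (simp add: KE_mem KE_mem')
qed auto

lemma treeC3:
  assumes "i < 2" "i' < 2" "i \<noteq> i'" "a < t" "b < t" "a \<noteq> b"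
  shows "is_S_tree (K2t_V t) (K2t_E t) {Inl i, Inr a, Inr b}
           {Inr a, Inl i', Inr b, Inl i} {{Inr a, Inl i'}, {Inl i', Inr b}, {Inr b, Inl i}}"
  unfolding is_S_tree_def
proof (intro conjI)
  show "is_tree {Inr a, Inl i', Inr b, Inl i} {{Inr a, Inl i'}, {Inl i', Inr b}, {Inr b, Inl i}}"
    by (rule path3) (use assms in simp)
  show "{Inr a, Inl i', Inr b, Inl i} \<subseteq> K2t_V t" using assms by (simp add: KV_Inl KV_Inr)
  show "{{Inr a, Inl i'}, {Inl i', Inr b}, {Inr b, Inl i}} \<subseteq> K2t_E t"
    using assms by (simp add: KE_mem KE_mem')
qed auto

lemma triples:
  assumes S: "S \<subseteq> K2t_V t" "card S = 3"
    and A: "\<And>a b c. a < t \<Longrightarrow> b < t \<Longrightarrow> c < t \<Longrightarrow> a \<noteq> b \<Longrightarrow> a \<noteq> c \<Longrightarrow> b \<noteq> c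
             \<Longrightarrow> P {Inr a, Inr b, Inr c}"
    and B: "\<And>a. a < t \<Longrightarrow> P {Inl 0, Inl 1, Inr a}"
    and C: "\<And>i a b. i < 2 \<Longrightarrow> a < t \<Longrightarrow> b < t \<Longrightarrow> a \<noteq> b \<Longrightarrow> P {Inl i, Inr a, Inr b}"
  shows "P S"
proof -
  obtain x y z where xyz: "S = {x,y,z}" "x \<noteq> y" "y \<noteq> z" "x \<noteq> z"
    using S(2) card_3_iff by metis
  have xV: "x \<in> K2t_V t" and yV: "y \<in> K2t_V t" and zV: "z \<in> K2t_V t" using S(1) xyz(1) by auto
  have LL: "P {Inl i, Inl i', Inr a}" if "i < 2" "i' < 2" "i \<noteq> i'" "a < t" for i i' a
  proof -
    have "{Inl i, Inl i', Inr a} = {Inl 0, Inl 1, Inr (a::nat)}"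
    proof (cases "i = 0")
      case True then have "i' = 1" using that by simp
      then show ?thesis using True by simp
    next
      case False then have "i = 1" "i' = 0" using that by simp_all
      then show ?thesis by (simp add: insert_commute)
    qed
    then show ?thesis using B[OF that(4)] by simp
  qed
  from KV_form[OF xV] KV_form[OF yV] KV_form[OF zV] xyz(2-4) show ?thesis
    unfolding xyz(1)
  proof (elim disjE exE conjE)
    fix i i' i'' assume "i < 2" "i' < 2" "i'' < 2" "x = Inl i" "y = Inl i'" "z = Inl i''"
      "x \<noteq> y" "y \<noteq> z" "x \<noteq> z"
    then show "P {x, y, z}" by auto
  next
    fix i i' a assume h: "i < 2" "i' < 2" "a < t" "x = Inl i" "y = Inl i'" "z = Inr a" "x \<noteq> y"
    then show "P {x, y, z}" using LL[of i i' a] by simp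
  next
    fix i i' a assume h: "i < 2" "i' < 2" "a < t" "x = Inl i" "z = Inl i'" "y = Inr a" "x \<noteq> z"
    have "{x,y,z} = {Inl i, Inl i', Inr a}" using h by (simp add: insert_commute)
    then show "P {x, y, z}" using LL[of i i' a] h by simp
  next
    fix i i' a assume h: "i < 2" "i' < 2" "a < t" "y = Inl i" "z = Inl i'" "x = Inr a" "y \<noteq> z"
    have "{x,y,z} = {Inl i, Inl i', Inr a}" using h by (simp add: insert_commute)
    then show "P {x, y, z}" using LL[of i i' a] h by simp
  next
    fix i a b assume h: "i < 2" "a < t" "b < t" "x = Inl i" "y = Inr a" "z = Inr b" "y \<noteq> z"
    then show "P {x, y, z}" using C[of i a b] by simp
  next
    fix i a b assume h: "i < 2" "a < t" "b < t" "y = Inl i" "x = Inr a" "z = Inr b" "x \<noteq> z"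
    have "{x,y,z} = {Inl i, Inr a, Inr b}" using h by (simp add: insert_commute)
    then show "P {x, y, z}" using C[of i a b] h by simp
  next
    fix i a b assume h: "i < 2" "a < t" "b < t" "z = Inl i" "x = Inr a" "y = Inr b" "x \<noteq> y"
    have "{x,y,z} = {Inl i, Inr a, Inr b}" using h by (simp add: insert_commute)
    then show "P {x, y, z}" using C[of i a b] h by simp
  next
    fix a b c assume h: "a < t" "b < t" "c < t" "x = Inr a" "y = Inr b" "z = Inr c"
      "x \<noteq> y" "y \<noteq> z" "x \<noteq> z"
    then show "P {x, y, z}" using A[of a b c] by simp
  qed
qed

lemma pig4: "(a::nat) < 3 \<Longrightarrow> b < 3 \<Longrightarrow> c < 3 \<Longrightarrow> d < 3 \<Longrightarrow>
  a = b \<or> a = c \<or> a = d \<or> b = c \<or> b = d \<or> c = d"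
  by arith

lemma third_val: "(a::nat) < 3 \<Longrightarrow> b < 3 \<Longrightarrow> u < 3 \<Longrightarrow> v < 3 \<Longrightarrow> a \<noteq> b \<Longrightarrow>
  u \<noteq> a \<Longrightarrow> u \<noteq> b \<Longrightarrow> v \<noteq> a \<Longrightarrow> v \<noteq> b \<Longrightarrow> u = v"
  by arith

lemma pig4': "(a::nat) < 3 \<Longrightarrow> b < 3 \<Longrightarrow> c < 3 \<Longrightarrow> d < 3 \<Longrightarrow> b \<noteq> c \<Longrightarrow> b \<noteq> d \<Longrightarrow> c \<noteq> d \<Longrightarrow>
  a = b \<or> a = c \<or> a = d"
  by arith

lemma comb:
  fixes X Y :: "nat \<Rightarrow> nat"
  assumes lt: "\<And>j. X j < 3" "\<And>j. Y j < 3"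
    and H: "\<And>a b d. a < 5 \<Longrightarrow> b < 5 \<Longrightarrow> d < 5 \<Longrightarrow> a \<noteq> b \<Longrightarrow> a \<noteq> d \<Longrightarrow> b \<noteq> d \<Longrightarrow>
      (X a \<noteq> X b \<and> X a \<noteq> X d \<and> X b \<noteq> X d) \<or> (Y a \<noteq> Y b \<and> Y a \<noteq> Y d \<and> Y b \<noteq> Y d)"
  shows False
proof -
  have "X 0 = X 1 \<or> X 0 = X 2 \<or> X 0 = X 3 \<or> X 1 = X 2 \<or> X 1 = X 3 \<or> X 2 = X 3"
    by (rule pig4[OF lt(1) lt(1) lt(1) lt(1)])
  then obtain p q where pq: "p < 5" "q < 5" "p \<noteq> q" "X p = X q"
    by (elim disjE) (erule that[rotated -1]; simp)+
  have "card ({0..<5} - {p,q}) = 3" using pq by simp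
  then obtain r1 r2 r3 where R: "{0..<5} - {p,q} = {r1,r2,r3}" "r1 \<noteq> r2" "r2 \<noteq> r3" "r1 \<noteq> r3"
    using card_3_iff by metis
  have "r1 \<in> {0..<5} - {p,q}" "r2 \<in> {0..<5} - {p,q}" "r3 \<in> {0..<5} - {p,q}"
    unfolding R(1) by simp_all
  then have r: "r1 < 5" "r2 < 5" "r3 < 5" "r1 \<noteq> p" "r1 \<noteq> q" "r2 \<noteq> p" "r2 \<noteq> q" "r3 \<noteq> p" "r3 \<noteq> q"
    by simp_all
  have Y1: "Y p \<noteq> Y q \<and> Y p \<noteq> Y r \<and> Y q \<noteq> Y r" if "r < 5" "r \<noteq> p" "r \<noteq> q" for r
  proof -
    have "(X p \<noteq> X q \<and> X p \<noteq> X r \<and> X q \<noteq> X r) \<or> (Y p \<noteq> Y q \<and> Y p \<noteq> Y r \<and> Y q \<noteq> Y r)"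
      by (rule H) (use pq that in simp_all)
    then show ?thesis using pq(4) by simp
  qed
  have y1: "Y p \<noteq> Y q \<and> Y p \<noteq> Y r1 \<and> Y q \<noteq> Y r1" by (rule Y1[OF r(1) r(4) r(5)])
  have y2: "Y p \<noteq> Y q \<and> Y p \<noteq> Y r2 \<and> Y q \<noteq> Y r2" by (rule Y1[OF r(2) r(6) r(7)])
  have y3: "Y p \<noteq> Y q \<and> Y p \<noteq> Y r3 \<and> Y q \<noteq> Y r3" by (rule Y1[OF r(3) r(8) r(9)])
  have YY: "Y r1 = Y r2" "Y r1 = Y r3"
    by (rule third_val[OF lt(2) lt(2) lt(2) lt(2), of p q], use y1 y2 y3 in simp_all)+
  have XD: "X r1 \<noteq> X r2 \<and> X r1 \<noteq> X r3 \<and> X r2 \<noteq> X r3"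
    using H[of r1 r2 r3] r R YY by auto
  then have "X p = X r1 \<or> X p = X r2 \<or> X p = X r3"
    using XD by (intro pig4'[OF lt(1) lt(1) lt(1) lt(1)]) auto
  then show False
  proof (elim disjE)
    assume "X p = X r1" then show False using H[of p r1 r2] r R YY pq by auto
  next
    assume "X p = X r2" then show False using H[of p r2 r1] r R YY pq by auto
  next
    assume "X p = X r3" then show False using H[of p r3 r1] r R YY pq by auto
  qed
qed

definition f :: "nat \<Rightarrow> nat \<Rightarrow> nat" where
  "f i j = (if i = 0 then (if j = 0 then 0 else if j = 1 then 1 else if j = 2 then 2 else 0)
            else (if j = 0 then 1 else if j = 1 then 0 else if j = 2 then 0 else 2))"

definition col :: "(nat + nat) set \<Rightarrow> nat" where
  "col e = f (THE i. Inl i \<in> e) (THE j. Inr j \<in> e)"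

lemma col_eq: "col {Inl i, Inr j} = f i j" "col {Inr j, Inl i} = f i j"
proof -
  have 1: "(THE i'. Inl i' \<in> {Inl i, Inr j}) = i" by (rule the_equality) auto
  have 2: "(THE j'. Inr j' \<in> {Inl i, Inr j}) = j" by (rule the_equality) auto
  show "col {Inl i, Inr j} = f i j" unfolding col_def 1 2 ..
  then show "col {Inr j, Inl i} = f i j" by (simp add: insert_commute)
qed

lemma f_lt: "f i j < 3" unfolding f_def by auto

lemma lt4: "a < (4::nat) \<Longrightarrow> a = 0 \<or> a = 1 \<or> a = 2 \<or> a = 3" by auto
lemma lt2: "a < (2::nat) \<Longrightarrow> a = 0 \<or> a = 1" by auto

lemma fA: assumes "a < 4" "b < 4" "c < 4" "a \<noteq> b" "a \<noteq> c" "b \<noteq> c"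
  shows "\<exists>i<2. f i a \<noteq> f i b \<and> f i a \<noteq> f i c \<and> f i b \<noteq> f i c"
proof -
  have "(f 0 a \<noteq> f 0 b \<and> f 0 a \<noteq> f 0 c \<and> f 0 b \<noteq> f 0 c) \<or>
        (f 1 a \<noteq> f 1 b \<and> f 1 a \<noteq> f 1 c \<and> f 1 b \<noteq> f 1 c)"
    using lt4[OF assms(1)] lt4[OF assms(2)] lt4[OF assms(3)] assms(4-6)
    by (elim disjE) (simp_all add: f_def)
  then show ?thesis
  proof (elim disjE)
    assume "f 0 a \<noteq> f 0 b \<and> f 0 a \<noteq> f 0 c \<and> f 0 b \<noteq> f 0 c"
    then show ?thesis by (intro exI[of _ 0]) simp
  next
    assume "f 1 a \<noteq> f 1 b \<and> f 1 a \<noteq> f 1 c \<and> f 1 b \<noteq> f 1 c"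
    then show ?thesis by (intro exI[of _ 1]) simp
  qed
qed

lemma fB: "a < 4 \<Longrightarrow> f 0 a \<noteq> f 1 a"
  by (drule lt4) (auto simp: f_def)

lemma fC: assumes "i < 2" "a < 4" "b < 4" "a \<noteq> b" "f i a = f i b"
  shows "f (1-i) a \<noteq> f (1-i) b \<and> f (1-i) a \<noteq> f i b \<and> f (1-i) b \<noteq> f i b"
  using lt2[OF assms(1)] lt4[OF assms(2)] lt4[OF assms(3)] assms(4,5)
  by (elim disjE) (simp_all add: f_def)

lemma inj2: "g x \<noteq> g y \<Longrightarrow> inj_on g {x,y}"
  by (auto simp: inj_on_def)

lemma inj3: "g x \<noteq> g y \<Longrightarrow> g x \<noteq> g z \<Longrightarrow> g y \<noteq> g z \<Longrightarrow> inj_on g {x,y,z}"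
  by (auto simp: inj_on_def)

lemma upper:
  assumes "t \<le> 4"
  shows "three_rainbow_coloring (K2t_V t) (K2t_E t) col"
  unfolding three_rainbow_coloring_def
proof (intro allI impI, elim conjE)
  fix S assume S: "S \<subseteq> K2t_V t" "card S = 3"
  show "\<exists>VT ET. is_S_tree (K2t_V t) (K2t_E t) S VT ET \<and> rainbow col ET"
  proof (rule triples[OF S])
    fix a b c assume h: "a < t" "b < t" "c < t" "a \<noteq> b" "a \<noteq> c" "b \<noteq> c"
    obtain i where i: "i < 2" "f i a \<noteq> f i b" "f i a \<noteq> f i c" "f i b \<noteq> f i c"
      using fA[of a b c] h assms by auto
    show "\<exists>VT ET. is_S_tree (K2t_V t) (K2t_E t) {Inr a, Inr b, Inr c} VT ET \<and> rainbow col ET"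
      unfolding rainbow_def
      by (rule exI, rule exI, rule conjI[OF treeA[OF i(1) h]]) (rule inj3, use i in \<open>simp_all add: col_eq\<close>)
  next
    fix a assume h: "a < t"
    show "\<exists>VT ET. is_S_tree (K2t_V t) (K2t_E t) {Inl 0, Inl 1, Inr a} VT ET \<and> rainbow col ET"
      unfolding rainbow_def
      by (rule exI, rule exI, rule conjI[OF treeB[OF h]]) (rule inj2, use fB[of a] h assms in \<open>simp add: col_eq\<close>)
  next
    fix i a b assume h: "i < (2::nat)" "a < t" "b < t" "a \<noteq> b"
    show "\<exists>VT ET. is_S_tree (K2t_V t) (K2t_E t) {Inl i, Inr a, Inr b} VT ET \<and> rainbow col ET"
    proof (cases "f i a = f i b")
      case False
      show ?thesis unfolding rainbow_def
        by (rule exI, rule exI, rule conjI[OF treeC2[OF h]]) (rule inj2, use False in \<open>simp add: col_eq\<close>)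
    next
      case True
      have hh: "1 - i < 2" "1 - i \<noteq> i" using h(1) by arith+
      have ff: "f (1-i) a \<noteq> f (1-i) b \<and> f (1-i) a \<noteq> f i b \<and> f (1-i) b \<noteq> f i b"
        using fC[OF h(1) _ _ h(4) True] h assms by simp
      show ?thesis unfolding rainbow_def
        by (rule exI, rule exI, rule conjI[OF treeC3[OF h(1) hh(1) hh(2)[symmetric] h(2-4)]])
          (rule inj3, use ff in \<open>simp_all add: col_eq\<close>)
    qed
  qed
qed

lemma col_range: "t \<le> 4 \<Longrightarrow> col ` K2t_E t \<subseteq> {..<3}"
  using KE_form col_eq f_lt by fastforce

lemma step_edge: "reach F u v \<Longrightarrow> u \<noteq> v \<Longrightarrow> \<exists>w. {u,w} \<in> F"
  unfolding reach_def by (erule converse_rtranclpE) auto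

lemma tree_conn: "is_S_tree V E S VT ET \<Longrightarrow> x \<in> S \<Longrightarrow> y \<in> S \<Longrightarrow> reach ET x y"
proof -
  assume a: "is_S_tree V E S VT ET" "x \<in> S" "y \<in> S"
  then have "is_tree VT ET" "S \<subseteq> VT" by (simp_all add: is_S_tree_def)
  then have c: "\<forall>u\<in>VT. \<forall>v\<in>VT. reach ET u v" "x \<in> VT" "y \<in> VT" using a(2,3)
    by (auto simp: is_tree_def)
  then show ?thesis by simp
qed

lemma has_edge:
  assumes "is_S_tree (K2t_V t) (K2t_E t) S VT ET" "Inr j \<in> S" "Inr k \<in> S" "j \<noteq> k"
  shows "\<exists>i<2. {Inl i, Inr j} \<in> ET"
proof -
  have T: "ET \<subseteq> K2t_E t" using assms(1) by (simp add: is_S_tree_def)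
  have "reach ET (Inr j) (Inr k)" by (rule tree_conn[OF assms(1-3)])
  have "\<exists>w. {Inr j, w} \<in> ET" using step_edge[OF \<open>reach ET (Inr j) (Inr k)\<close>] assms(4) by simp
  then obtain w where w: "{Inr j, w} \<in> ET" ..
  then have "{Inr j, w} \<in> K2t_E t" using T by (rule subsetD[rotated])
  then have "\<exists>i j'. i < 2 \<and> j' < t \<and> {Inr j, w} = {Inl i, Inr j'}" by (rule KE_form)
  then obtain i j' where ij: "i < 2" "{Inr j, w} = {Inl i, Inr j'}" by auto
  then have "w = Inl i" by (auto simp: doubleton_eq_iff)
  then have "{Inl i, Inr j} \<in> ET" using w by (simp add: insert_commute)
  then show ?thesis using ij(1) by blast
qed

lemma lower3:
  assumes "3 \<le> t" "c ` K2t_E t \<subseteq> {..<k}" "three_rainbow_coloring (K2t_V t) (K2t_E t) c"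
  shows "3 \<le> k"
proof (rule ccontr)
  assume nk: "\<not> 3 \<le> k"
  let ?S = "{Inr 0, Inr 1, Inr 2} :: (nat + nat) set"
  have "?S \<subseteq> K2t_V t" using assms(1) by (simp add: KV_Inr)
  moreover have "card ?S = 3" by simp
  ultimately have "\<exists>VT ET. is_S_tree (K2t_V t) (K2t_E t) ?S VT ET \<and> rainbow c ET"
    using assms(3) unfolding three_rainbow_coloring_def by simp
  then obtain VT ET where T: "is_S_tree (K2t_V t) (K2t_E t) ?S VT ET" "inj_on c ET"
    unfolding rainbow_def by (elim exE conjE)
  have ET: "ET \<subseteq> K2t_E t" using T(1) by (simp add: is_S_tree_def)
  obtain i0 where i0: "i0 < 2" "{Inl i0, Inr 0} \<in> ET" using has_edge[OF T(1), of 0 1] by auto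
  obtain i1 where i1: "i1 < 2" "{Inl i1, Inr 1} \<in> ET" using has_edge[OF T(1), of 1 0] by auto
  obtain i2 where i2: "i2 < 2" "{Inl i2, Inr 2} \<in> ET" using has_edge[OF T(1), of 2 0] by auto
  have ne: "{Inl i0, Inr 0} \<noteq> {Inl i1, Inr (1::nat)}" "{Inl i0, Inr 0} \<noteq> {Inl i2, Inr (2::nat)}"
    "{Inl i1, Inr 1} \<noteq> {Inl i2, Inr (2::nat)}" by (auto simp: doubleton_eq_iff)
  have cne: "c {Inl i0, Inr 0} \<noteq> c {Inl i1, Inr 1}" "c {Inl i0, Inr 0} \<noteq> c {Inl i2, Inr 2}"
    "c {Inl i1, Inr 1} \<noteq> c {Inl i2, Inr 2}"
    using T(2) i0(2) i1(2) i2(2) ne by (simp_all add: inj_on_eq_iff)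
  have "c {Inl i0, Inr 0} < k" "c {Inl i1, Inr 1} < k" "c {Inl i2, Inr 2} < k"
    using assms(2) ET i0(2) i1(2) i2(2) by auto
  then show False using cne nk by arith
qed

lemma sameL:
  assumes "ET \<subseteq> {{Inl i, Inr a}, {Inl j, Inr b}, {Inl k, Inr c}}" "a \<noteq> b" "a \<noteq> c" "b \<noteq> c"
    "reach ET (Inr a) (Inr b)"
  shows "i = j"
proof (rule ccontr)
  assume ij: "i \<noteq> j"
  define C where "C = {Inl i, Inr a} \<union> (if k = i then {Inr c} else {})"
  have cl: "q \<in> C" if pq: "{p,q} \<in> ET" "p \<in> C" for p q
  proof -
    have "{p,q} \<in> {{Inl i, Inr a}, {Inl j, Inr b}, {Inl k, Inr c}}" using assms(1) pq(1) by (rule subsetD)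
    then have "{p,q} = {Inl i, Inr a} \<or> {p,q} = {Inl j, Inr b} \<or> {p,q} = {Inl k, Inr c}" by simp
    then show "q \<in> C" using pq(2) ij assms(2-4) unfolding C_def
      by (auto simp: doubleton_eq_iff split: if_splits)
  qed
  have aC: "Inr a \<in> C" unfolding C_def by simp
  have "Inr b \<in> C" by (rule reach_closed[of ET C, OF cl assms(5) aC])
  then show False using assms(2-4) unfolding C_def by (auto split: if_splits)
qed

lemma triple_good:
  assumes rng: "c ` K2t_E t \<subseteq> {..<3}" and rc: "three_rainbow_coloring (K2t_V t) (K2t_E t) c"
    and h: "a < t" "b < t" "d < t" "a \<noteq> b" "a \<noteq> d" "b \<noteq> d"
  shows "(c {Inl 0, Inr a} \<noteq> c {Inl 0, Inr b} \<and> c {Inl 0, Inr a} \<noteq> c {Inl 0, Inr d} \<and>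
          c {Inl 0, Inr b} \<noteq> c {Inl 0, Inr d}) \<or>
         (c {Inl 1, Inr a} \<noteq> c {Inl 1, Inr b} \<and> c {Inl 1, Inr a} \<noteq> c {Inl 1, Inr d} \<and>
          c {Inl 1, Inr b} \<noteq> c {Inl 1, Inr d})"
proof -
  let ?S = "{Inr a, Inr b, Inr d} :: (nat + nat) set"
  have "?S \<subseteq> K2t_V t" using h by (simp add: KV_Inr)
  moreover have "card ?S = 3" using h by simp
  ultimately have "\<exists>VT ET. is_S_tree (K2t_V t) (K2t_E t) ?S VT ET \<and> rainbow c ET"
    using rc unfolding three_rainbow_coloring_def by simp
  then obtain VT ET where T: "is_S_tree (K2t_V t) (K2t_E t) ?S VT ET" "inj_on c ET"
    unfolding rainbow_def by (elim exE conjE)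
  have ET: "ET \<subseteq> K2t_E t" using T(1) by (simp add: is_S_tree_def)
  obtain ia where ia: "ia < 2" "{Inl ia, Inr a} \<in> ET" using has_edge[OF T(1), of a b] h by auto
  obtain ib where ib: "ib < 2" "{Inl ib, Inr b} \<in> ET" using has_edge[OF T(1), of b a] h by auto
  obtain id where id: "id < 2" "{Inl id, Inr d} \<in> ET" using has_edge[OF T(1), of d a] h by auto
  have ne: "{Inl ia, Inr a} \<noteq> {Inl ib, Inr b}" "{Inl ia, Inr a} \<noteq> {Inl id, Inr d}"
    "{Inl ib, Inr b} \<noteq> {Inl id, Inr d}" using h by (auto simp: doubleton_eq_iff)
  have cne: "c {Inl ia, Inr a} \<noteq> c {Inl ib, Inr b}" "c {Inl ia, Inr a} \<noteq> c {Inl id, Inr d}"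
    "c {Inl ib, Inr b} \<noteq> c {Inl id, Inr d}"
    using T(2) ia(2) ib(2) id(2) ne by (simp_all add: inj_on_eq_iff)
  have clt: "c e < 3" if "e \<in> ET" for e using that rng ET by auto
  have sub: "ET \<subseteq> {{Inl ia, Inr a}, {Inl ib, Inr b}, {Inl id, Inr d}}"
  proof
    fix e assume e: "e \<in> ET"
    have "c e = c {Inl ia, Inr a} \<or> c e = c {Inl ib, Inr b} \<or> c e = c {Inl id, Inr d}"
      using clt[OF e] clt[OF ia(2)] clt[OF ib(2)] clt[OF id(2)] cne by arith
    then have "e = {Inl ia, Inr a} \<or> e = {Inl ib, Inr b} \<or> e = {Inl id, Inr d}"
      using T(2) e ia(2) ib(2) id(2) by (simp add: inj_on_eq_iff)
    then show "e \<in> {{Inl ia, Inr a}, {Inl ib, Inr b}, {Inl id, Inr d}}" by simp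
  qed
  have sub': "ET \<subseteq> {{Inl ia, Inr a}, {Inl id, Inr d}, {Inl ib, Inr b}}"
    using sub by (simp add: insert_commute)
  have eq1: "ia = ib" by (rule sameL[OF sub h(4-6) tree_conn[OF T(1)]]) simp_all
  have eq2: "ia = id" by (rule sameL[OF sub' h(5) h(4) h(6)[symmetric] tree_conn[OF T(1)]]) simp_all
  show ?thesis using lt2[OF ia(1)] cne eq1 eq2 by auto
qed

lemma lower4:
  assumes "5 \<le> t" "c ` K2t_E t \<subseteq> {..<k}" "three_rainbow_coloring (K2t_V t) (K2t_E t) c"
  shows "4 \<le> k"
proof (rule ccontr)
  assume "\<not> 4 \<le> k"
  then have rng: "c ` K2t_E t \<subseteq> {..<3}" using assms(2) by auto
  define X where "X j = (if j < 5 then c {Inl 0, Inr j} else 0)" for j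
  define Y where "Y j = (if j < 5 then c {Inl 1, Inr j} else 0)" for j
  show False
  proof (rule comb[of X Y])
    fix j show "X j < 3" unfolding X_def using rng assms(1) KE_mem[of 0 j t] by auto
  next
    fix j show "Y j < 3" unfolding Y_def using rng assms(1) KE_mem[of 1 j t] by auto
  next
    fix a b d :: nat assume h: "a < 5" "b < 5" "d < 5" "a \<noteq> b" "a \<noteq> d" "b \<noteq> d"
    show "(X a \<noteq> X b \<and> X a \<noteq> X d \<and> X b \<noteq> X d) \<or> (Y a \<noteq> Y b \<and> Y a \<noteq> Y d \<and> Y b \<noteq> Y d)"
      using triple_good[OF rng assms(3), of a b d] h assms(1) unfolding X_def Y_def by simp
  qed
qed

definition col2 :: "(nat + nat) set \<Rightarrow> nat" where
  "col2 e = 2 * (THE j. Inr j \<in> e) + (THE i. Inl i \<in> e)"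

lemma col2_eq: "col2 {Inl i, Inr j} = 2 * j + i"
proof -
  have 1: "(THE i'. Inl i' \<in> {Inl i, Inr j}) = i" by (rule the_equality) auto
  have 2: "(THE j'. Inr j' \<in> {Inl i, Inr j}) = j" by (rule the_equality) auto
  show ?thesis unfolding col2_def 1 2 ..
qed

lemma col2_inj: "inj_on col2 (K2t_E t)"
proof (rule inj_onI)
  fix e1 e2 assume e: "e1 \<in> K2t_E t" "e2 \<in> K2t_E t" "col2 e1 = col2 e2"
  obtain i j where 1: "i < 2" "e1 = {Inl i, Inr j}" using KE_form[OF e(1)] by blast
  obtain i' j' where 2: "i' < 2" "e2 = {Inl i', Inr j'}" using KE_form[OF e(2)] by blast
  have "2 * j + i = 2 * j' + i'" using e(3) 1 2 by (simp add: col2_eq)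
  then have "i = i' \<and> j = j'" using 1(1) 2(1) by arith
  then show "e1 = e2" using 1 2 by simp
qed

lemma col2_range: "col2 ` K2t_E t \<subseteq> {..<2 * t}"
proof
  fix x assume "x \<in> col2 ` K2t_E t"
  then obtain e where "e \<in> K2t_E t" "x = col2 e" by blast
  then obtain i j where "i < 2" "j < t" "x = 2 * j + i" using KE_form col2_eq by metis
  then show "x \<in> {..<2 * t}" by simp
qed

lemma col2_trc: "three_rainbow_coloring (K2t_V t) (K2t_E t) col2"
  unfolding three_rainbow_coloring_def
proof (intro allI impI, elim conjE)
  fix S assume S: "S \<subseteq> K2t_V t" "card S = 3"
  have rb: "rainbow col2 ET" if "is_S_tree (K2t_V t) (K2t_E t) S' VT ET" for S' VT ET
  proof -
    have "ET \<subseteq> K2t_E t" using that by (simp add: is_S_tree_def)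
    then show ?thesis unfolding rainbow_def using col2_inj by (rule inj_on_subset[rotated])
  qed
  show "\<exists>VT ET. is_S_tree (K2t_V t) (K2t_E t) S VT ET \<and> rainbow col2 ET"
  proof (rule triples[OF S])
    fix a b c assume h: "a < t" "b < t" "c < t" "a \<noteq> b" "a \<noteq> c" "b \<noteq> c"
    have z: "(0::nat) < 2" by simp
    show "\<exists>VT ET. is_S_tree (K2t_V t) (K2t_E t) {Inr a, Inr b, Inr c} VT ET \<and> rainbow col2 ET"
      by (rule exI, rule exI, rule conjI[OF treeA[OF z h] rb[OF treeA[OF z h]]])
  next
    fix a assume h: "a < t"
    show "\<exists>VT ET. is_S_tree (K2t_V t) (K2t_E t) {Inl 0, Inl 1, Inr a} VT ET \<and> rainbow col2 ET"
      by (rule exI, rule exI, rule conjI[OF treeB[OF h] rb[OF treeB[OF h]]])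
  next
    fix i a b assume h: "i < (2::nat)" "a < t" "b < t" "a \<noteq> b"
    show "\<exists>VT ET. is_S_tree (K2t_V t) (K2t_E t) {Inl i, Inr a, Inr b} VT ET \<and> rainbow col2 ET"
      by (rule exI, rule exI, rule conjI[OF treeC2[OF h] rb[OF treeC2[OF h]]])
  qed
qed

theorem lemma3:
  shows "rx3 (K2t_V 3) (K2t_E 3) = 3 \<and> rx3 (K2t_V 4) (K2t_E 4) = 3 \<and>
         (\<forall>t\<ge>5. rx3 (K2t_V t) (K2t_E t) \<ge> 4)"
proof (intro conjI allI impI)
  have eq3: "rx3 (K2t_V t) (K2t_E t) = 3" if "3 \<le> t" "t \<le> 4" for t
    unfolding rx3_def
  proof (rule Least_equality)
    show "\<exists>c. c ` K2t_E t \<subseteq> {..<3} \<and> three_rainbow_coloring (K2t_V t) (K2t_E t) c"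
      by (rule exI[of _ col], rule conjI[OF col_range[OF that(2)] upper[OF that(2)]])
  next
    fix k assume "\<exists>c. c ` K2t_E t \<subseteq> {..<k} \<and> three_rainbow_coloring (K2t_V t) (K2t_E t) c"
    then show "3 \<le> k" by (elim exE conjE) (rule lower3[OF that(1)])
  qed
  show "rx3 (K2t_V 3) (K2t_E 3) = 3" by (rule eq3) simp_all
  show "rx3 (K2t_V 4) (K2t_E 4) = 3" by (rule eq3) simp_all
  fix t :: nat assume t: "5 \<le> t"
  let ?P = "\<lambda>k. \<exists>c. c ` K2t_E t \<subseteq> {..<k} \<and> three_rainbow_coloring (K2t_V t) (K2t_E t) c"
  have "?P (2 * t)" by (rule exI[of _ col2], rule conjI[OF col2_range col2_trc])
  then have "?P (Least ?P)" by (rule LeastI)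
  then have "4 \<le> Least ?P" by (elim exE conjE) (rule lower4[OF t])
  then show "4 \<le> rx3 (K2t_V t) (K2t_E t)" unfolding rx3_def .
qed

end
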